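(* Let $S$ be a monoid, $A_S$ a right $S$-act, and $A_1\subseteq A_2\subseteq\cdots\subseteq A_n=A$ subacts. Then $A_S$ is artinian (resp. noetherian, Rees artinian, Rees noetherian) if and only if $A_1$ and all Rees factor acts $A_{i+1}/A_i$, $1\le i\le n-1$, are artinian (resp. noetherian, Rees artinian, Rees noetherian).
   Context: For a subact $B\subseteq A$, the Rees factor act $A/B$ is the quotient of $A$ by the Rees congruence $(B\times B)\cup\Delta_A$. A right $S$-act is artinian (noetherian) if its lattice of congruences satisfies the descending (ascending) chain condition; Rees artinian (Rees noetherian) if its subacts satisfy the descending (ascending) chain condition. *)

theory Defs
  imports Main
begin

definition right_act :: "'a set \<Rightarrow> ('a \<Rightarrow> 's::monoid_mult \<Rightarrow> 'a) \<Rightarrow> bool" where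
  "right_act A act \<longleftrightarrow>
     (\<forall>a\<in>A. \<forall>s. act a s \<in> A) \<and>
     (\<forall>a\<in>A. act a 1 = a) \<and>
     (\<forall>a\<in>A. \<forall>s t. act a (s * t) = act (act a s) t)"

definition subact :: "'a set \<Rightarrow> 'a set \<Rightarrow> ('a \<Rightarrow> 's::monoid_mult \<Rightarrow> 'a) \<Rightarrow> bool" where
  "subact B A act \<longleftrightarrow> B \<subseteq> A \<and> (\<forall>b\<in>B. \<forall>s. act b s \<in> B)"

definition act_congruence :: "'a set \<Rightarrow> ('a \<Rightarrow> 's::monoid_mult \<Rightarrow> 'a) \<Rightarrow> 'a rel \<Rightarrow> bool" where
  "act_congruence A act \<rho> \<longleftrightarrow>
     equiv A \<rho> \<and> (\<forall>a b s. (a, b) \<in> \<rho> \<longrightarrow> (act a s, act b s) \<in> \<rho>)"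

definition act_artinian :: "'a set \<Rightarrow> ('a \<Rightarrow> 's::monoid_mult \<Rightarrow> 'a) \<Rightarrow> bool" where
  "act_artinian A act \<longleftrightarrow>
     (\<forall>f :: nat \<Rightarrow> 'a rel. (\<forall>n. act_congruence A act (f n)) \<and> (\<forall>n. f (Suc n) \<subseteq> f n)
        \<longrightarrow> (\<exists>N. \<forall>n\<ge>N. f n = f N))"

definition act_noetherian :: "'a set \<Rightarrow> ('a \<Rightarrow> 's::monoid_mult \<Rightarrow> 'a) \<Rightarrow> bool" where
  "act_noetherian A act \<longleftrightarrow>
     (\<forall>f :: nat \<Rightarrow> 'a rel. (\<forall>n. act_congruence A act (f n)) \<and> (\<forall>n. f n \<subseteq> f (Suc n))
        \<longrightarrow> (\<exists>N. \<forall>n\<ge>N. f n = f N))"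

definition act_rees_artinian :: "'a set \<Rightarrow> ('a \<Rightarrow> 's::monoid_mult \<Rightarrow> 'a) \<Rightarrow> bool" where
  "act_rees_artinian A act \<longleftrightarrow>
     (\<forall>f :: nat \<Rightarrow> 'a set. (\<forall>n. subact (f n) A act) \<and> (\<forall>n. f (Suc n) \<subseteq> f n)
        \<longrightarrow> (\<exists>N. \<forall>n\<ge>N. f n = f N))"

definition act_rees_noetherian :: "'a set \<Rightarrow> ('a \<Rightarrow> 's::monoid_mult \<Rightarrow> 'a) \<Rightarrow> bool" where
  "act_rees_noetherian A act \<longleftrightarrow>
     (\<forall>f :: nat \<Rightarrow> 'a set. (\<forall>n. subact (f n) A act) \<and> (\<forall>n. f n \<subseteq> f (Suc n))
        \<longrightarrow> (\<exists>N. \<forall>n\<ge>N. f n = f N))"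

definition rees_cong :: "'a set \<Rightarrow> 'a set \<Rightarrow> 'a rel" where
  "rees_cong A B = (B \<times> B) \<union> Id_on A"

definition quot_act :: "'a rel \<Rightarrow> ('a \<Rightarrow> 's \<Rightarrow> 'a) \<Rightarrow> 'a set \<Rightarrow> 's \<Rightarrow> 'a set" where
  "quot_act \<rho> act X s = \<rho> `` ((\<lambda>x. act x s) ` X)"

definition rees_factor_carrier :: "'a set \<Rightarrow> 'a set \<Rightarrow> 'a set set" where
  "rees_factor_carrier A B = A // rees_cong A B"

definition rees_factor_act :: "'a set \<Rightarrow> 'a set \<Rightarrow> ('a \<Rightarrow> 's \<Rightarrow> 'a) \<Rightarrow> 'a set \<Rightarrow> 's \<Rightarrow> 'a set" where
  "rees_factor_act A B act = quot_act (rees_cong A B) act"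

end

theory Submission
  imports Defs
begin


definition dcc :: "'x set set \<Rightarrow> bool" where
  "dcc L \<longleftrightarrow> (\<forall>f. (\<forall>n. f n \<in> L) \<and> (\<forall>n. f (Suc n) \<subseteq> f n) \<longrightarrow> (\<exists>N. \<forall>n\<ge>N. f n = f N))"
definition acc :: "'x set set \<Rightarrow> bool" where
  "acc L \<longleftrightarrow> (\<forall>f. (\<forall>n. f n \<in> L) \<and> (\<forall>n. f n \<subseteq> f (Suc n)) \<longrightarrow> (\<exists>N. \<forall>n\<ge>N. f n = f N))"

lemma dcc_emb:
  assumes "\<And>x. x \<in> L1 \<Longrightarrow> e x \<in> L2" "\<And>x y. x \<in> L1 \<Longrightarrow> y \<in> L1 \<Longrightarrow> x \<subseteq> y \<Longrightarrow> e x \<subseteq> e y"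
    "inj_on e L1" "dcc L2"
  shows "dcc L1"
  unfolding dcc_def
proof (intro allI impI)
  fix f assume f: "(\<forall>n. f n \<in> L1) \<and> (\<forall>n. f (Suc n) \<subseteq> f n)"
  have "(\<forall>n. (e \<circ> f) n \<in> L2) \<and> (\<forall>n. (e \<circ> f) (Suc n) \<subseteq> (e \<circ> f) n)"
    using f assms(1,2) by auto
  then obtain N where "\<forall>n\<ge>N. e (f n) = e (f N)" using assms(4) unfolding dcc_def by fastforce
  then show "\<exists>N. \<forall>n\<ge>N. f n = f N" using assms(3) f by (meson inj_onD)
qed

lemma acc_emb:
  assumes "\<And>x. x \<in> L1 \<Longrightarrow> e x \<in> L2" "\<And>x y. x \<in> L1 \<Longrightarrow> y \<in> L1 \<Longrightarrow> x \<subseteq> y \<Longrightarrow> e x \<subseteq> e y"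
    "inj_on e L1" "acc L2"
  shows "acc L1"
  unfolding acc_def
proof (intro allI impI)
  fix f assume f: "(\<forall>n. f n \<in> L1) \<and> (\<forall>n. f n \<subseteq> f (Suc n))"
  have "(\<forall>n. (e \<circ> f) n \<in> L2) \<and> (\<forall>n. (e \<circ> f) n \<subseteq> (e \<circ> f) (Suc n))"
    using f assms(1,2) by auto
  then obtain N where "\<forall>n\<ge>N. e (f n) = e (f N)" using assms(4) unfolding acc_def by fastforce
  then show "\<exists>N. \<forall>n\<ge>N. f n = f N" using assms(3) f by (meson inj_onD)
qed

lemma dcc_ext:
  assumes "\<And>x. x \<in> L \<Longrightarrow> r x \<in> L1" "\<And>x y. x \<in> L \<Longrightarrow> y \<in> L \<Longrightarrow> x \<subseteq> y \<Longrightarrow> r x \<subseteq> r y"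
    "\<And>x. x \<in> L \<Longrightarrow> p x \<in> L2" "\<And>x y. x \<in> L \<Longrightarrow> y \<in> L \<Longrightarrow> x \<subseteq> y \<Longrightarrow> p x \<subseteq> p y"
    "\<And>x y. x \<in> L \<Longrightarrow> y \<in> L \<Longrightarrow> x \<subseteq> y \<Longrightarrow> r x = r y \<Longrightarrow> p x = p y \<Longrightarrow> x = y"
    "dcc L1" "dcc L2"
  shows "dcc L"
  unfolding dcc_def
proof (intro allI impI)
  fix f assume f: "(\<forall>n. f n \<in> L) \<and> (\<forall>n. f (Suc n) \<subseteq> f n)"
  have "(\<forall>n. (r \<circ> f) n \<in> L1) \<and> (\<forall>n. (r \<circ> f) (Suc n) \<subseteq> (r \<circ> f) n)"
    using f assms(1,2) by auto
  then obtain N1 where N1: "\<forall>n\<ge>N1. r (f n) = r (f N1)" using assms(6) unfolding dcc_def by fastforce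
  have "(\<forall>n. (p \<circ> f) n \<in> L2) \<and> (\<forall>n. (p \<circ> f) (Suc n) \<subseteq> (p \<circ> f) n)"
    using f assms(3,4) by auto
  then obtain N2 where N2: "\<forall>n\<ge>N2. p (f n) = p (f N2)" using assms(7) unfolding dcc_def by fastforce
  show "\<exists>N. \<forall>n\<ge>N. f n = f N"
  proof (intro exI allI impI)
    fix n assume n: "n \<ge> max N1 N2"
    have "f n \<subseteq> f (max N1 N2)" using lift_Suc_antimono_le[of f, OF _ n] f by auto
    moreover have "r (f n) = r (f (max N1 N2))" using N1 n by (metis max.cobounded1 order_trans)
    moreover have "p (f n) = p (f (max N1 N2))" using N2 n by (metis max.cobounded2 order_trans)
    ultimately show "f n = f (max N1 N2)" using f by (intro assms(5)) auto
  qed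
qed

lemma acc_ext:
  assumes "\<And>x. x \<in> L \<Longrightarrow> r x \<in> L1" "\<And>x y. x \<in> L \<Longrightarrow> y \<in> L \<Longrightarrow> x \<subseteq> y \<Longrightarrow> r x \<subseteq> r y"
    "\<And>x. x \<in> L \<Longrightarrow> p x \<in> L2" "\<And>x y. x \<in> L \<Longrightarrow> y \<in> L \<Longrightarrow> x \<subseteq> y \<Longrightarrow> p x \<subseteq> p y"
    "\<And>x y. x \<in> L \<Longrightarrow> y \<in> L \<Longrightarrow> x \<subseteq> y \<Longrightarrow> r x = r y \<Longrightarrow> p x = p y \<Longrightarrow> x = y"
    "acc L1" "acc L2"
  shows "acc L"
  unfolding acc_def
proof (intro allI impI)
  fix f assume f: "(\<forall>n. f n \<in> L) \<and> (\<forall>n. f n \<subseteq> f (Suc n))"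
  have "(\<forall>n. (r \<circ> f) n \<in> L1) \<and> (\<forall>n. (r \<circ> f) n \<subseteq> (r \<circ> f) (Suc n))"
    using f assms(1,2) by auto
  then obtain N1 where N1: "\<forall>n\<ge>N1. r (f n) = r (f N1)" using assms(6) unfolding acc_def by fastforce
  have "(\<forall>n. (p \<circ> f) n \<in> L2) \<and> (\<forall>n. (p \<circ> f) n \<subseteq> (p \<circ> f) (Suc n))"
    using f assms(3,4) by auto
  then obtain N2 where N2: "\<forall>n\<ge>N2. p (f n) = p (f N2)" using assms(7) unfolding acc_def by fastforce
  show "\<exists>N. \<forall>n\<ge>N. f n = f N"
  proof (intro exI allI impI)
    fix n assume n: "n \<ge> max N1 N2"
    have "f (max N1 N2) \<subseteq> f n" using lift_Suc_mono_le[of f, OF _ n] f by auto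
    moreover have "r (f (max N1 N2)) = r (f n)" using N1 n by (metis max.cobounded1 order_trans)
    moreover have "p (f (max N1 N2)) = p (f n)" using N2 n by (metis max.cobounded2 order_trans)
    ultimately have "f (max N1 N2) = f n" using f by (intro assms(5)) auto
    then show "f n = f (max N1 N2)" by simp
  qed
qed

lemma art_dcc: "act_artinian A act = dcc {r. act_congruence A act r}"
  unfolding act_artinian_def dcc_def by auto
lemma noe_acc: "act_noetherian A act = acc {r. act_congruence A act r}"
  unfolding act_noetherian_def acc_def by auto
lemma rart_dcc: "act_rees_artinian A act = dcc {C. subact C A act}"
  unfolding act_rees_artinian_def dcc_def by auto
lemma rnoe_acc: "act_rees_noetherian A act = acc {C. subact C A act}"
  unfolding act_rees_noetherian_def acc_def by auto

lemma chain_lemma: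
  fixes PA PQ :: "nat \<Rightarrow> bool"
  assumes "\<And>k. 1 \<le> k \<Longrightarrow> k < n \<Longrightarrow> (PA (Suc k) \<longleftrightarrow> PA k \<and> PQ k)" "1 \<le> m" "m \<le> n"
  shows "PA m \<longleftrightarrow> PA 1 \<and> (\<forall>i\<in>{1..<m}. PQ i)"
  using assms(2,3)
proof (induction m)
  case 0 then show ?case by simp
next
  case (Suc m)
  show ?case
  proof (cases "m = 0")
    case True then show ?thesis by simp
  next
    case False
    then have IH: "PA m \<longleftrightarrow> PA 1 \<and> (\<forall>i\<in>{1..<m}. PQ i)" using Suc by simp
    have "{1..<Suc m} = insert m {1..<m}" using False by auto
    then show ?thesis using IH assms(1)[of m] False Suc.prems by auto
  qed
qed



lemma right_act_sub: "right_act A act \<Longrightarrow> subact B A act \<Longrightarrow> right_act B act"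
  unfolding right_act_def subact_def by (simp add: subset_iff)

lemma equivI2:
  assumes "r \<subseteq> A \<times> A" "\<And>x. x \<in> A \<Longrightarrow> (x, x) \<in> r" "\<And>x y. (x, y) \<in> r \<Longrightarrow> (y, x) \<in> r"
    "\<And>x y z. (x, y) \<in> r \<Longrightarrow> (y, z) \<in> r \<Longrightarrow> (x, z) \<in> r"
  shows "equiv A r"
  using assms unfolding equiv_def refl_on_def sym_def trans_def by blast

lemma equivD2:
  assumes "equiv A r"
  shows "r \<subseteq> A \<times> A" "\<And>x. x \<in> A \<Longrightarrow> (x, x) \<in> r" "\<And>x y. (x, y) \<in> r \<Longrightarrow> (y, x) \<in> r"
    "\<And>x y z. (x, y) \<in> r \<Longrightarrow> (y, z) \<in> r \<Longrightarrow> (x, z) \<in> r"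
  using assms unfolding equiv_def refl_on_def sym_def trans_def by blast+
context
  fixes A B :: "'a set" and act :: "'a \<Rightarrow> 's::monoid_mult \<Rightarrow> 'a"
  assumes RA: "right_act A act" and SB: "subact B A act"
begin

lemma BA: "B \<subseteq> A" using SB unfolding subact_def by auto
lemma Bcl: "b \<in> B \<Longrightarrow> act b s \<in> B" using SB unfolding subact_def by auto
lemma Acl: "a \<in> A \<Longrightarrow> act a s \<in> A" using RA unfolding right_act_def by auto

lemma eqv: "equiv A (rees_cong A B)"
  using BA unfolding rees_cong_def by (intro equivI2) auto

lemma cls: "a \<in> A \<Longrightarrow> rees_cong A B `` {a} = (if a \<in> B then B else {a})"
  using BA unfolding rees_cong_def by auto

lemma qact: "a \<in> A \<Longrightarrow> rees_factor_act A B act (rees_cong A B `` {a}) s = rees_cong A B `` {act a s}"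
proof -
  assume a: "a \<in> A"
  show ?thesis
  proof (cases "a \<in> B")
    case True
    then have "(\<lambda>x. act x s) ` B \<subseteq> B" "(\<lambda>x. act x s) ` B \<noteq> {}" using Bcl by auto
    then have "rees_cong A B `` ((\<lambda>x. act x s) ` B) = B" using BA unfolding rees_cong_def by auto
    then show ?thesis using True a Bcl[of a s] BA cls[of a] cls[of "act a s"]
      unfolding rees_factor_act_def quot_act_def by auto
  next
    case False
    then show ?thesis using a cls[of a] unfolding rees_factor_act_def quot_act_def by auto
  qed
qed

lemma Q_elem: "X \<in> rees_factor_carrier A B \<longleftrightarrow> (\<exists>a\<in>A. X = rees_cong A B `` {a})"
  unfolding rees_factor_carrier_def quotient_def by auto

lemma cls_eq: "a \<in> A \<Longrightarrow> b \<in> A \<Longrightarrow> rees_cong A B `` {a} = rees_cong A B `` {b} \<longleftrightarrow> (a, b) \<in> rees_cong A B"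
  using eq_equiv_class_iff[OF eqv] by blast

lemma cong_sub: "act_congruence A act r \<Longrightarrow> r \<subseteq> A \<times> A"
  unfolding act_congruence_def using equiv_type by blast

abbreviation "LA \<equiv> {r. act_congruence A act r}"
abbreviation "LB \<equiv> {r. act_congruence B act r}"
abbreviation "LQ \<equiv> {t. act_congruence (rees_factor_carrier A B) (rees_factor_act A B act) t}"

definition "cphi t = {(a, b). a \<in> A \<and> b \<in> A \<and> (rees_cong A B `` {a}, rees_cong A B `` {b}) \<in> t}"
definition "ctau r = r \<union> {(a, b). \<exists>c\<in>B. \<exists>d\<in>B. (a, c) \<in> r \<and> (d, b) \<in> r}"
definition "cpsi r = {(rees_cong A B `` {a}, rees_cong A B `` {b}) | a b. (a, b) \<in> r}"

lemma B_e: "act_congruence B act r \<Longrightarrow> act_congruence A act (r \<union> Id_on A)"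
  unfolding act_congruence_def
proof (elim conjE, intro conjI)
  assume e: "equiv B r" and c: "\<forall>a b s. (a, b) \<in> r \<longrightarrow> (act a s, act b s) \<in> r"
  have "r \<subseteq> B \<times> B" using equiv_type[OF e] .
  show "equiv A (r \<union> Id_on A)"
  proof (rule equivI2)
    show "r \<union> Id_on A \<subseteq> A \<times> A" using \<open>r \<subseteq> B \<times> B\<close> BA by auto
    show "\<And>x. x \<in> A \<Longrightarrow> (x, x) \<in> r \<union> Id_on A" by auto
    show "\<And>x y. (x, y) \<in> r \<union> Id_on A \<Longrightarrow> (y, x) \<in> r \<union> Id_on A" using equivD2(3)[OF e] by blast
    show "\<And>x y z. (x, y) \<in> r \<union> Id_on A \<Longrightarrow> (y, z) \<in> r \<union> Id_on A \<Longrightarrow> (x, z) \<in> r \<union> Id_on A"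
      using equivD2(4)[OF e] by blast
  qed
  show "\<forall>a b s. (a, b) \<in> r \<union> Id_on A \<longrightarrow> (act a s, act b s) \<in> r \<union> Id_on A"
    using c Acl by auto
qed

lemma B_r: "act_congruence A act r \<Longrightarrow> act_congruence B act (r \<inter> B \<times> B)"
proof -
  assume "act_congruence A act r"
  then have e: "equiv A r" and c: "\<forall>a b s. (a, b) \<in> r \<longrightarrow> (act a s, act b s) \<in> r"
    unfolding act_congruence_def by auto
  have "equiv B (r \<inter> B \<times> B)"
    by (rule equivI2) (use equivD2[OF e] BA in blast)+
  then show ?thesis unfolding act_congruence_def using c Bcl by auto
qed

lemma B_inj: "inj_on (\<lambda>r. r \<union> Id_on A) LB"
proof (rule inj_onI)
  fix x y assume x: "x \<in> LB" and y: "y \<in> LB" and eq: "x \<union> Id_on A = y \<union> Id_on A"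
  have xs: "x \<subseteq> B \<times> B" "\<forall>b\<in>B. (b, b) \<in> x" using x unfolding act_congruence_def equiv_def refl_on_def by auto
  have ys: "y \<subseteq> B \<times> B" "\<forall>b\<in>B. (b, b) \<in> y" using y unfolding act_congruence_def equiv_def refl_on_def by auto
  have "x = (x \<union> Id_on A) \<inter> B \<times> B" using xs BA by auto
  also have "\<dots> = (y \<union> Id_on A) \<inter> B \<times> B" using eq by simp
  also have "\<dots> = y" using ys BA by auto
  finally show "x = y" .
qed

lemma Q_phi: "t \<in> LQ \<Longrightarrow> cphi t \<in> LA"
proof -
  assume t: "t \<in> LQ"
  then have e: "equiv (rees_factor_carrier A B) t" and c: "\<forall>X Y s. (X, Y) \<in> t \<longrightarrow> (rees_factor_act A B act X s, rees_factor_act A B act Y s) \<in> t"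
    unfolding act_congruence_def by auto
  have cl: "a \<in> A \<Longrightarrow> rees_cong A B `` {a} \<in> rees_factor_carrier A B" for a using Q_elem by auto
  have "equiv A (cphi t)"
    unfolding cphi_def by (rule equivI2) (use equivD2[OF e] cl in blast)+
  moreover have "(act a s, act b s) \<in> cphi t" if "(a, b) \<in> cphi t" for a b s
  proof -
    have ab: "a \<in> A" "b \<in> A" "(rees_cong A B `` {a}, rees_cong A B `` {b}) \<in> t" using that unfolding cphi_def by auto
    then have "(rees_factor_act A B act (rees_cong A B `` {a}) s, rees_factor_act A B act (rees_cong A B `` {b}) s) \<in> t"
      using c by blast
    then show ?thesis using ab qact Acl unfolding cphi_def by auto
  qed
  ultimately show ?thesis unfolding act_congruence_def by auto
qed

lemma Q_pair: "(X, Y) \<in> rees_factor_carrier A B \<times> rees_factor_carrier A B \<Longrightarrow>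
   (\<And>a b. a \<in> A \<Longrightarrow> b \<in> A \<Longrightarrow> X = rees_cong A B `` {a} \<Longrightarrow> Y = rees_cong A B `` {b} \<Longrightarrow> P) \<Longrightarrow> P"
proof -
  assume "(X, Y) \<in> rees_factor_carrier A B \<times> rees_factor_carrier A B" and H: "\<And>a b. a \<in> A \<Longrightarrow> b \<in> A \<Longrightarrow> X = rees_cong A B `` {a} \<Longrightarrow> Y = rees_cong A B `` {b} \<Longrightarrow> P"
  then have "X \<in> rees_factor_carrier A B" "Y \<in> rees_factor_carrier A B" by auto
  then obtain a b where "a \<in> A" "X = rees_cong A B `` {a}" "b \<in> A" "Y = rees_cong A B `` {b}"
    using Q_elem by meson
  then show P using H by blast
qed

lemma Q_inj_aux: "x \<in> LQ \<Longrightarrow> y \<in> LQ \<Longrightarrow> cphi x = cphi y \<Longrightarrow> x \<subseteq> y"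
proof
  fix p assume x: "x \<in> LQ" and y: "y \<in> LQ" and eq: "cphi x = cphi y" and p: "p \<in> x"
  have xs: "x \<subseteq> rees_factor_carrier A B \<times> rees_factor_carrier A B" using x unfolding act_congruence_def using equiv_type by auto
  obtain X Y where XY: "p = (X, Y)" by force
  then have "(X, Y) \<in> rees_factor_carrier A B \<times> rees_factor_carrier A B" using xs p by auto
  then obtain a b where ab: "a \<in> A" "b \<in> A" "X = rees_cong A B `` {a}" "Y = rees_cong A B `` {b}" by (rule Q_pair)
  then have "(a, b) \<in> cphi x" using p XY unfolding cphi_def by auto
  then have "(a, b) \<in> cphi y" using eq by simp
  then show "p \<in> y" using ab XY unfolding cphi_def by auto
qed

lemma Q_inj: "inj_on cphi LQ"
  by (rule inj_onI) (intro equalityI Q_inj_aux; simp)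

lemma tau_cong: "r \<in> LA \<Longrightarrow> ctau r \<in> LA"
proof -
  assume r: "r \<in> LA"
  then have e: "equiv A r" and c: "\<forall>a b s. (a, b) \<in> r \<longrightarrow> (act a s, act b s) \<in> r"
    unfolding act_congruence_def by auto
  note E = equivD2[OF e]
  have "equiv A (ctau r)" unfolding ctau_def
  proof (rule equivI2)
    show "r \<union> {(a, b). \<exists>c\<in>B. \<exists>d\<in>B. (a, c) \<in> r \<and> (d, b) \<in> r} \<subseteq> A \<times> A" using E(1) by blast
    show "\<And>x. x \<in> A \<Longrightarrow> (x, x) \<in> r \<union> {(a, b). \<exists>c\<in>B. \<exists>d\<in>B. (a, c) \<in> r \<and> (d, b) \<in> r}" using E(2) by blast
    show "\<And>x y. (x, y) \<in> r \<union> {(a, b). \<exists>c\<in>B. \<exists>d\<in>B. (a, c) \<in> r \<and> (d, b) \<in> r} \<Longrightarrow> (y, x) \<in> r \<union> {(a, b). \<exists>c\<in>B. \<exists>d\<in>B. (a, c) \<in> r \<and> (d, b) \<in> r}" using E(3) by blast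
    show "\<And>x y z. (x, y) \<in> r \<union> {(a, b). \<exists>c\<in>B. \<exists>d\<in>B. (a, c) \<in> r \<and> (d, b) \<in> r} \<Longrightarrow> (y, z) \<in> r \<union> {(a, b). \<exists>c\<in>B. \<exists>d\<in>B. (a, c) \<in> r \<and> (d, b) \<in> r} \<Longrightarrow> (x, z) \<in> r \<union> {(a, b). \<exists>c\<in>B. \<exists>d\<in>B. (a, c) \<in> r \<and> (d, b) \<in> r}"
      using E(4) by (smt (verit, best) CollectD CollectI Un_iff case_prodD case_prodI)
  qed
  moreover have "(act a s, act b s) \<in> ctau r" if "(a, b) \<in> ctau r" for a b s
    using that c Bcl unfolding ctau_def by blast
  ultimately show ?thesis unfolding act_congruence_def by auto
qed

lemma tau_rees: "r \<in> LA \<Longrightarrow> rees_cong A B \<subseteq> ctau r"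
proof -
  assume "r \<in> LA"
  then have "equiv A r" unfolding act_congruence_def by auto
  note E = equivD2[OF this]
  show ?thesis unfolding ctau_def rees_cong_def using E(2) BA by blast
qed

lemma Q_cl: "a \<in> A \<Longrightarrow> rees_cong A B `` {a} \<in> rees_factor_carrier A B"
  unfolding rees_factor_carrier_def by (rule quotientI)

lemma Q_cases: "X \<in> rees_factor_carrier A B \<Longrightarrow> (\<And>a. a \<in> A \<Longrightarrow> X = rees_cong A B `` {a} \<Longrightarrow> P) \<Longrightarrow> P"
  unfolding rees_factor_carrier_def by (erule quotientE) blast

lemma cpsi_mem: "(X, Y) \<in> cpsi r \<Longrightarrow> (\<And>a b. X = rees_cong A B `` {a} \<Longrightarrow> Y = rees_cong A B `` {b} \<Longrightarrow> (a, b) \<in> r \<Longrightarrow> P) \<Longrightarrow> P"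
  unfolding cpsi_def by blast

lemma cpsi_memI: "(a, b) \<in> r \<Longrightarrow> (rees_cong A B `` {a}, rees_cong A B `` {b}) \<in> cpsi r"
  unfolding cpsi_def by blast

lemma cls_r: "r \<in> LA \<Longrightarrow> rees_cong A B \<subseteq> r \<Longrightarrow> a \<in> A \<Longrightarrow> a' \<in> A \<Longrightarrow> rees_cong A B `` {a} = rees_cong A B `` {a'} \<Longrightarrow> (a, a') \<in> r"
  using cls_eq by blast

lemma psi_key: "r \<in> LA \<Longrightarrow> rees_cong A B \<subseteq> r \<Longrightarrow> (rees_cong A B `` {a}, rees_cong A B `` {b}) \<in> cpsi r \<Longrightarrow> a \<in> A \<Longrightarrow> b \<in> A \<Longrightarrow> (a, b) \<in> r"
proof -
  assume r: "r \<in> LA" and rr: "rees_cong A B \<subseteq> r" and m: "(rees_cong A B `` {a}, rees_cong A B `` {b}) \<in> cpsi r" and ab: "a \<in> A" "b \<in> A"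
  have e: "equiv A r" using r unfolding act_congruence_def by auto
  have rs: "r \<subseteq> A \<times> A" using equiv_type[OF e] .
  obtain a' b' where h: "rees_cong A B `` {a} = rees_cong A B `` {a'}" "rees_cong A B `` {b} = rees_cong A B `` {b'}" "(a', b') \<in> r"
    using m by (rule cpsi_mem) blast
  then have "a' \<in> A" "b' \<in> A" using rs by auto
  then have "(a, a') \<in> r" "(b, b') \<in> r" using cls_r[OF r rr] h ab by auto
  then show ?thesis using h(3) equivD2(3,4)[OF e] by blast
qed

lemma psi_cong: "r \<in> LA \<Longrightarrow> rees_cong A B \<subseteq> r \<Longrightarrow> cpsi r \<in> LQ"
proof -
  assume r: "r \<in> LA" and rr: "rees_cong A B \<subseteq> r"
  then have e: "equiv A r" and c: "\<forall>a b s. (a, b) \<in> r \<longrightarrow> (act a s, act b s) \<in> r"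
    unfolding act_congruence_def by auto
  have rs: "r \<subseteq> A \<times> A" using equiv_type[OF e] .
  have "equiv (rees_factor_carrier A B) (cpsi r)"
  proof (rule equivI2)
    show "cpsi r \<subseteq> rees_factor_carrier A B \<times> rees_factor_carrier A B"
    proof
      fix p assume "p \<in> cpsi r"
      then obtain X Y where p: "p = (X, Y)" "(X, Y) \<in> cpsi r" by (cases p) auto
      then obtain a b where "X = rees_cong A B `` {a}" "Y = rees_cong A B `` {b}" "(a, b) \<in> r" using cpsi_mem by metis
      then show "p \<in> rees_factor_carrier A B \<times> rees_factor_carrier A B" using rs p Q_cl by auto
    qed
    show "\<And>X. X \<in> rees_factor_carrier A B \<Longrightarrow> (X, X) \<in> cpsi r"
    proof -
      fix X assume "X \<in> rees_factor_carrier A B"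
      then obtain a where "a \<in> A" "X = rees_cong A B `` {a}" by (rule Q_cases)
      then show "(X, X) \<in> cpsi r" using cpsi_memI equivD2(2)[OF e] by auto
    qed
    show "\<And>X Y. (X, Y) \<in> cpsi r \<Longrightarrow> (Y, X) \<in> cpsi r"
    proof -
      fix X Y assume "(X, Y) \<in> cpsi r"
      then obtain a b where "X = rees_cong A B `` {a}" "Y = rees_cong A B `` {b}" "(a, b) \<in> r" using cpsi_mem by metis
      then show "(Y, X) \<in> cpsi r" using cpsi_memI equivD2(3)[OF e] by auto
    qed
    show "\<And>X Y Z. (X, Y) \<in> cpsi r \<Longrightarrow> (Y, Z) \<in> cpsi r \<Longrightarrow> (X, Z) \<in> cpsi r"
    proof -
      fix X Y Z assume "(X, Y) \<in> cpsi r" "(Y, Z) \<in> cpsi r"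
      then obtain a b b' c where h: "X = rees_cong A B `` {a}" "Y = rees_cong A B `` {b}" "(a, b) \<in> r"
        "Y = rees_cong A B `` {b'}" "Z = rees_cong A B `` {c}" "(b', c) \<in> r" by (metis cpsi_mem)
      then have "b \<in> A" "b' \<in> A" using rs by auto
      then have "(b, b') \<in> r" using cls_r[OF r rr] h by auto
      then have "(a, c) \<in> r" using h equivD2(4)[OF e] by blast
      then show "(X, Z) \<in> cpsi r" using h cpsi_memI by auto
    qed
  qed
  moreover have "(rees_factor_act A B act X s, rees_factor_act A B act Y s) \<in> cpsi r" if XY: "(X, Y) \<in> cpsi r" for X Y s
  proof -
    obtain a b where h: "X = rees_cong A B `` {a}" "Y = rees_cong A B `` {b}" "(a, b) \<in> r" using XY by (rule cpsi_mem)
    moreover then have "a \<in> A" "b \<in> A" using rs by auto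
    moreover have "(act a s, act b s) \<in> r" using c h by blast
    ultimately show ?thesis using qact cpsi_memI by auto
  qed
  ultimately show ?thesis unfolding act_congruence_def by auto
qed

lemma psi_inj: "r \<in> LA \<Longrightarrow> rees_cong A B \<subseteq> r \<Longrightarrow> r' \<in> LA \<Longrightarrow> rees_cong A B \<subseteq> r' \<Longrightarrow> cpsi r = cpsi r' \<Longrightarrow> r \<subseteq> r'"
proof
  fix p assume r: "r \<in> LA" "rees_cong A B \<subseteq> r" and r': "r' \<in> LA" "rees_cong A B \<subseteq> r'" and eq: "cpsi r = cpsi r'" and p: "p \<in> r"
  have rs: "r \<subseteq> A \<times> A" using cong_sub r by auto
  obtain a b where ab: "p = (a, b)" by force
  then have "(rees_cong A B `` {a}, rees_cong A B `` {b}) \<in> cpsi r'" using eq p cpsi_memI by metis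
  moreover have "a \<in> A" "b \<in> A" using rs p ab by auto
  ultimately show "p \<in> r'" using psi_key[OF r'] ab by auto
qed

theorem art_ext: "act_artinian A act \<longleftrightarrow> act_artinian B act \<and> act_artinian (rees_factor_carrier A B) (rees_factor_act A B act)"
  unfolding art_dcc
proof (intro iffI conjI; (elim conjE)?)
  assume d: "dcc LA"
  show "dcc LB" by (rule dcc_emb[where e = "\<lambda>r. r \<union> Id_on A", OF _ _ B_inj d]) (auto intro: B_e)
  show "dcc LQ"
  proof (rule dcc_emb[where e = cphi, OF _ _ Q_inj d])
    show "\<And>x. x \<in> LQ \<Longrightarrow> cphi x \<in> LA" using Q_phi by blast
    show "\<And>x y. x \<subseteq> y \<Longrightarrow> cphi x \<subseteq> cphi y" unfolding cphi_def by blast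
  qed
next
  assume d1: "dcc LB" and d2: "dcc LQ"
  show "dcc LA"
  proof (rule dcc_ext[where r = "\<lambda>r. r \<inter> B \<times> B" and p = "\<lambda>r. cpsi (ctau r)", OF _ _ _ _ _ d1 d2])
    show "\<And>x. x \<in> LA \<Longrightarrow> x \<inter> B \<times> B \<in> LB" using B_r by auto
    show "\<And>x y. x \<subseteq> y \<Longrightarrow> x \<inter> B \<times> B \<subseteq> y \<inter> B \<times> B" by auto
    show "\<And>x. x \<in> LA \<Longrightarrow> cpsi (ctau x) \<in> LQ" using psi_cong tau_cong tau_rees by auto
    show "\<And>x y. x \<subseteq> y \<Longrightarrow> cpsi (ctau x) \<subseteq> cpsi (ctau y)" unfolding cpsi_def ctau_def by blast
    fix x y assume x: "x \<in> LA" and y: "y \<in> LA" and xy: "x \<subseteq> y" and rr: "x \<inter> B \<times> B = y \<inter> B \<times> B"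
      and pp: "cpsi (ctau x) = cpsi (ctau y)"
    have "ctau y \<subseteq> ctau x" using psi_inj[OF tau_cong[OF y] tau_rees[OF y] tau_cong[OF x] tau_rees[OF x]] pp by auto
    have ex: "equiv A x" and ey: "equiv A y" using x y unfolding act_congruence_def by auto
    show "x = y"
    proof (intro equalityI xy subsetI)
      fix p assume "p \<in> y"
      then have "p \<in> ctau x" using \<open>ctau y \<subseteq> ctau x\<close> unfolding ctau_def by auto
      then show "p \<in> x"
      proof (cases "p \<in> x")
        case False
        then obtain a b c d where "p = (a, b)" "c \<in> B" "d \<in> B" "(a, c) \<in> x" "(d, b) \<in> x"
          using \<open>p \<in> ctau x\<close> unfolding ctau_def by auto
        moreover then have "(c, d) \<in> y" using xy \<open>p \<in> y\<close> equivD2(3,4)[OF ey] by blast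
        moreover then have "(c, d) \<in> x" using rr \<open>c \<in> B\<close> \<open>d \<in> B\<close> by auto
        ultimately show ?thesis using equivD2(4)[OF ex] by blast
      qed simp
    qed
  qed
qed

theorem noe_ext: "act_noetherian A act \<longleftrightarrow> act_noetherian B act \<and> act_noetherian (rees_factor_carrier A B) (rees_factor_act A B act)"
  unfolding noe_acc
proof (intro iffI conjI; (elim conjE)?)
  assume d: "acc LA"
  show "acc LB" by (rule acc_emb[where e = "\<lambda>r. r \<union> Id_on A", OF _ _ B_inj d]) (auto intro: B_e)
  show "acc LQ"
  proof (rule acc_emb[where e = cphi, OF _ _ Q_inj d])
    show "\<And>x. x \<in> LQ \<Longrightarrow> cphi x \<in> LA" using Q_phi by blast
    show "\<And>x y. x \<subseteq> y \<Longrightarrow> cphi x \<subseteq> cphi y" unfolding cphi_def by blast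
  qed
next
  assume d1: "acc LB" and d2: "acc LQ"
  show "acc LA"
  proof (rule acc_ext[where r = "\<lambda>r. r \<inter> B \<times> B" and p = "\<lambda>r. cpsi (ctau r)", OF _ _ _ _ _ d1 d2])
    show "\<And>x. x \<in> LA \<Longrightarrow> x \<inter> B \<times> B \<in> LB" using B_r by auto
    show "\<And>x y. x \<subseteq> y \<Longrightarrow> x \<inter> B \<times> B \<subseteq> y \<inter> B \<times> B" by auto
    show "\<And>x. x \<in> LA \<Longrightarrow> cpsi (ctau x) \<in> LQ" using psi_cong tau_cong tau_rees by auto
    show "\<And>x y. x \<subseteq> y \<Longrightarrow> cpsi (ctau x) \<subseteq> cpsi (ctau y)" unfolding cpsi_def ctau_def by blast
    fix x y assume x: "x \<in> LA" and y: "y \<in> LA" and xy: "x \<subseteq> y" and rr: "x \<inter> B \<times> B = y \<inter> B \<times> B"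
      and pp: "cpsi (ctau x) = cpsi (ctau y)"
    have "ctau y \<subseteq> ctau x" using psi_inj[OF tau_cong[OF y] tau_rees[OF y] tau_cong[OF x] tau_rees[OF x]] pp by auto
    have ex: "equiv A x" and ey: "equiv A y" using x y unfolding act_congruence_def by auto
    show "x = y"
    proof (intro equalityI xy subsetI)
      fix p assume "p \<in> y"
      then have "p \<in> ctau x" using \<open>ctau y \<subseteq> ctau x\<close> unfolding ctau_def by auto
      then show "p \<in> x"
      proof (cases "p \<in> x")
        case False
        then obtain a b c d where "p = (a, b)" "c \<in> B" "d \<in> B" "(a, c) \<in> x" "(d, b) \<in> x"
          using \<open>p \<in> ctau x\<close> unfolding ctau_def by auto
        moreover then have "(c, d) \<in> y" using xy \<open>p \<in> y\<close> equivD2(3,4)[OF ey] by blast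
        moreover then have "(c, d) \<in> x" using rr \<open>c \<in> B\<close> \<open>d \<in> B\<close> by auto
        ultimately show ?thesis using equivD2(4)[OF ex] by blast
      qed simp
    qed
  qed
qed


abbreviation "SA \<equiv> {C. subact C A act}"
abbreviation "SB \<equiv> {C. subact C B act}"
abbreviation "SQ \<equiv> {C. subact C (rees_factor_carrier A B) (rees_factor_act A B act)}"

lemma in_cls: "a' \<in> A \<Longrightarrow> a \<in> rees_cong A B `` {a'} \<Longrightarrow> rees_cong A B `` {a} = rees_cong A B `` {a'} \<and> a \<in> A"
proof -
  assume a': "a' \<in> A" and a: "a \<in> rees_cong A B `` {a'}"
  show ?thesis
  proof (cases "a' \<in> B")
    case True
    then have "a \<in> B" using a cls[OF a'] by auto
    then show ?thesis using True cls[OF a'] cls[of a] BA by auto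
  next
    case False
    then show ?thesis using a cls[OF a'] a' by auto
  qed
qed

lemma self_cls: "a \<in> A \<Longrightarrow> a \<in> rees_cong A B `` {a}"
  using cls by auto

lemma RB_e: "subact C B act \<Longrightarrow> subact C A act"
  using BA unfolding subact_def by auto

lemma RB_r: "subact D A act \<Longrightarrow> subact (D \<inter> B) B act"
  using Bcl unfolding subact_def by auto

lemma Q_cases2: "Y \<in> X \<Longrightarrow> X \<subseteq> rees_factor_carrier A B \<Longrightarrow> \<exists>a'. a' \<in> A \<and> Y = rees_cong A B `` {a'}"
proof -
  assume "Y \<in> X" "X \<subseteq> rees_factor_carrier A B"
  then have "Y \<in> rees_factor_carrier A B" by blast
  then show ?thesis by (rule Q_cases) blast
qed

lemma mem_class: "a \<in> Y \<Longrightarrow> Y \<in> X \<Longrightarrow> X \<subseteq> rees_factor_carrier A B \<Longrightarrow> rees_cong A B `` {a} = Y \<and> a \<in> A"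
proof -
  assume h: "a \<in> Y" "Y \<in> X" "X \<subseteq> rees_factor_carrier A B"
  obtain a' where a': "a' \<in> A" "Y = rees_cong A B `` {a'}" using Q_cases2[OF h(2,3)] by blast
  show ?thesis using in_cls[OF a'(1)] h(1) a'(2) by simp
qed

lemma RQ_q: "subact X (rees_factor_carrier A B) (rees_factor_act A B act) \<Longrightarrow> subact (\<Union>X) A act"
  unfolding subact_def
proof (elim conjE, intro conjI ballI allI)
  assume XQ: "X \<subseteq> rees_factor_carrier A B" and cl: "\<forall>b\<in>X. \<forall>s. rees_factor_act A B act b s \<in> X"
  show "\<Union>X \<subseteq> A"
  proof
    fix a assume "a \<in> \<Union>X"
    then obtain Y where "a \<in> Y" "Y \<in> X" by auto
    then show "a \<in> A" using mem_class XQ by blast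
  qed
  fix a s assume "a \<in> \<Union>X"
  then obtain Y where Y: "a \<in> Y" "Y \<in> X" by auto
  then have ac: "rees_cong A B `` {a} = Y" "a \<in> A" using mem_class XQ by blast+
  have "rees_factor_act A B act Y s = rees_cong A B `` {act a s}" using qact[OF ac(2)] ac(1) by simp
  moreover have "rees_factor_act A B act Y s \<in> X" using cl Y(2) by blast
  ultimately have "rees_cong A B `` {act a s} \<in> X" by simp
  moreover have "act a s \<in> rees_cong A B `` {act a s}" using self_cls Acl ac by blast
  ultimately show "act a s \<in> \<Union>X" by blast
qed

lemma RQ_inj: "inj_on Union SQ"
proof (rule inj_onI)
  have main: "X \<subseteq> Y" if X: "X \<in> SQ" and Y: "Y \<in> SQ" and eq: "\<Union>X = \<Union>Y" for X Y
  proof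
    have XQ: "X \<subseteq> rees_factor_carrier A B" and YQ: "Y \<subseteq> rees_factor_carrier A B" using X Y unfolding subact_def by auto
    fix Z assume Z: "Z \<in> X"
    obtain a where a: "a \<in> A" "Z = rees_cong A B `` {a}" using Q_cases2[OF Z XQ] by blast
    then have "a \<in> Z" using self_cls by simp
    then have "a \<in> \<Union>Y" using eq Z by blast
    then obtain W where W: "a \<in> W" "W \<in> Y" by auto
    then have "rees_cong A B `` {a} = W" using mem_class YQ by blast
    then have "W = Z" using a by simp
    then show "Z \<in> Y" using W by simp
  qed
  fix X Y assume "X \<in> SQ" "Y \<in> SQ" "\<Union>X = \<Union>Y"
  then show "X = Y" using main[of X Y] main[of Y X] by auto
qed

definition "rp D = {X \<in> rees_factor_carrier A B. X \<subseteq> D \<union> B}"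

lemma RQ_p: "subact D A act \<Longrightarrow> subact (rp D) (rees_factor_carrier A B) (rees_factor_act A B act)"
  unfolding subact_def
proof (elim conjE, intro conjI ballI allI)
  assume DA: "D \<subseteq> A" and cl: "\<forall>b\<in>D. \<forall>s. act b s \<in> D"
  show "rp D \<subseteq> rees_factor_carrier A B" unfolding rp_def by auto
  fix X s assume X: "X \<in> rp D"
  then obtain a where a: "a \<in> A" "X = rees_cong A B `` {a}" using Q_cases unfolding rp_def by blast
  then have aD: "a \<in> D \<union> B" using X self_cls unfolding rp_def by blast
  have e: "rees_factor_act A B act X s = rees_cong A B `` {act a s}" using qact a by metis
  have "rees_cong A B `` {act a s} \<subseteq> D \<union> B"
  proof (cases "act a s \<in> B")
    case True then show ?thesis using cls Acl a by auto
  next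
    case False
    then have "a \<notin> B" using Bcl by auto
    then have "act a s \<in> D" using aD cl by auto
    then show ?thesis using cls Acl a False by auto
  qed
  then show "rees_factor_act A B act X s \<in> rp D" using e Q_cl Acl a unfolding rp_def by auto
qed

theorem rart_ext: "act_rees_artinian A act \<longleftrightarrow> act_rees_artinian B act \<and> act_rees_artinian (rees_factor_carrier A B) (rees_factor_act A B act)"
  unfolding rart_dcc
proof (intro iffI conjI; (elim conjE)?)
  assume d: "dcc SA"
  show "dcc SB" by (rule dcc_emb[where e = "\<lambda>C. C", OF _ _ _ d]) (auto intro: RB_e)
  show "dcc SQ"
  proof (rule dcc_emb[where e = Union, OF _ _ RQ_inj d])
    show "\<And>x. x \<in> SQ \<Longrightarrow> \<Union>x \<in> SA" using RQ_q by blast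
    show "\<And>x y. x \<subseteq> y \<Longrightarrow> \<Union>x \<subseteq> \<Union>y" by blast
  qed
next
  assume d1: "dcc SB" and d2: "dcc SQ"
  show "dcc SA"
  proof (rule dcc_ext[where r = "\<lambda>D. D \<inter> B" and p = rp, OF _ _ _ _ _ d1 d2])
    show "\<And>x. x \<in> SA \<Longrightarrow> x \<inter> B \<in> SB" using RB_r by auto
    show "\<And>x y. x \<subseteq> y \<Longrightarrow> x \<inter> B \<subseteq> y \<inter> B" by auto
    show "\<And>x. x \<in> SA \<Longrightarrow> rp x \<in> SQ" using RQ_p by auto
    show "\<And>x y. x \<subseteq> y \<Longrightarrow> rp x \<subseteq> rp y" unfolding rp_def by blast
    fix x y assume x: "x \<in> SA" and y: "y \<in> SA" and xy: "x \<subseteq> y" and rr: "x \<inter> B = y \<inter> B"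
      and pp: "rp x = rp y"
    show "x = y"
    proof (intro equalityI xy subsetI)
      fix d assume d: "d \<in> y"
      show "d \<in> x"
      proof (cases "d \<in> B")
        case True then show ?thesis using rr d by auto
      next
        case False
        have dA: "d \<in> A" using y d unfolding subact_def by auto
        have "rees_cong A B `` {d} \<subseteq> y \<union> B" using cls[OF dA] False d by auto
        then have "rees_cong A B `` {d} \<in> rp y" using Q_cl[OF dA] unfolding rp_def by blast
        then have "rees_cong A B `` {d} \<in> rp x" using pp by simp
        then have "rees_cong A B `` {d} \<subseteq> x \<union> B" unfolding rp_def by blast
        then show ?thesis using self_cls[OF dA] False by auto
      qed
    qed
  qed
qed

theorem rnoe_ext: "act_rees_noetherian A act \<longleftrightarrow> act_rees_noetherian B act \<and> act_rees_noetherian (rees_factor_carrier A B) (rees_factor_act A B act)"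
  unfolding rnoe_acc
proof (intro iffI conjI; (elim conjE)?)
  assume d: "acc SA"
  show "acc SB" by (rule acc_emb[where e = "\<lambda>C. C", OF _ _ _ d]) (auto intro: RB_e)
  show "acc SQ"
  proof (rule acc_emb[where e = Union, OF _ _ RQ_inj d])
    show "\<And>x. x \<in> SQ \<Longrightarrow> \<Union>x \<in> SA" using RQ_q by blast
    show "\<And>x y. x \<subseteq> y \<Longrightarrow> \<Union>x \<subseteq> \<Union>y" by blast
  qed
next
  assume d1: "acc SB" and d2: "acc SQ"
  show "acc SA"
  proof (rule acc_ext[where r = "\<lambda>D. D \<inter> B" and p = rp, OF _ _ _ _ _ d1 d2])
    show "\<And>x. x \<in> SA \<Longrightarrow> x \<inter> B \<in> SB" using RB_r by auto
    show "\<And>x y. x \<subseteq> y \<Longrightarrow> x \<inter> B \<subseteq> y \<inter> B" by auto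
    show "\<And>x. x \<in> SA \<Longrightarrow> rp x \<in> SQ" using RQ_p by auto
    show "\<And>x y. x \<subseteq> y \<Longrightarrow> rp x \<subseteq> rp y" unfolding rp_def by blast
    fix x y assume x: "x \<in> SA" and y: "y \<in> SA" and xy: "x \<subseteq> y" and rr: "x \<inter> B = y \<inter> B"
      and pp: "rp x = rp y"
    show "x = y"
    proof (intro equalityI xy subsetI)
      fix d assume d: "d \<in> y"
      show "d \<in> x"
      proof (cases "d \<in> B")
        case True then show ?thesis using rr d by auto
      next
        case False
        have dA: "d \<in> A" using y d unfolding subact_def by auto
        have "rees_cong A B `` {d} \<subseteq> y \<union> B" using cls[OF dA] False d by auto
        then have "rees_cong A B `` {d} \<in> rp y" using Q_cl[OF dA] unfolding rp_def by blast
        then have "rees_cong A B `` {d} \<in> rp x" using pp by simp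
        then have "rees_cong A B `` {d} \<subseteq> x \<union> B" unfolding rp_def by blast
        then show ?thesis using self_cls[OF dA] False by auto
      qed
    qed
  qed
qed

end

theorem mainTheorem6:
  fixes act :: "'a \<Rightarrow> 's::monoid_mult \<Rightarrow> 'a"
    and A :: "'a set" and As :: "nat \<Rightarrow> 'a set" and n :: nat
  assumes "right_act A act"
    and "n \<ge> 1"
    and "\<forall>i\<in>{1..n}. subact (As i) A act"
    and "\<forall>i\<in>{1..<n}. As i \<subseteq> As (Suc i)"
    and "As n = A"
  shows "(act_artinian A act \<longleftrightarrow>
            act_artinian (As 1) act \<and>
            (\<forall>i\<in>{1..<n}. act_artinian (rees_factor_carrier (As (Suc i)) (As i))
                                        (rees_factor_act (As (Suc i)) (As i) act)))
       \<and> (act_noetherian A act \<longleftrightarrow>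
            act_noetherian (As 1) act \<and>
            (\<forall>i\<in>{1..<n}. act_noetherian (rees_factor_carrier (As (Suc i)) (As i))
                                        (rees_factor_act (As (Suc i)) (As i) act)))
       \<and> (act_rees_artinian A act \<longleftrightarrow>
            act_rees_artinian (As 1) act \<and>
            (\<forall>i\<in>{1..<n}. act_rees_artinian (rees_factor_carrier (As (Suc i)) (As i))
                                        (rees_factor_act (As (Suc i)) (As i) act)))
       \<and> (act_rees_noetherian A act \<longleftrightarrow>
            act_rees_noetherian (As 1) act \<and>
            (\<forall>i\<in>{1..<n}. act_rees_noetherian (rees_factor_carrier (As (Suc i)) (As i))
                                        (rees_factor_act (As (Suc i)) (As i) act)))"
proof -
  have step: "right_act (As (Suc k)) act \<and> subact (As k) (As (Suc k)) act" if k: "1 \<le> k" "k < n" for k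
  proof
    have s1: "subact (As (Suc k)) A act" "subact (As k) A act" using assms(3) k by auto
    show "right_act (As (Suc k)) act" using right_act_sub[OF assms(1) s1(1)] .
    have "As k \<subseteq> As (Suc k)" using assms(4) k by auto
    then show "subact (As k) (As (Suc k)) act" using s1(2) unfolding subact_def by auto
  qed
  have n: "1 \<le> n" "n \<le> n" using assms(2) by auto
  have c1: "act_artinian (As n) act \<longleftrightarrow> act_artinian (As 1) act \<and>
            (\<forall>i\<in>{1..<n}. act_artinian (rees_factor_carrier (As (Suc i)) (As i))
                                        (rees_factor_act (As (Suc i)) (As i) act))"
    by (rule chain_lemma[OF _ n]) (use step art_ext in blast)
  have c2: "act_noetherian (As n) act \<longleftrightarrow> act_noetherian (As 1) act \<and>
            (\<forall>i\<in>{1..<n}. act_noetherian (rees_factor_carrier (As (Suc i)) (As i))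
                                        (rees_factor_act (As (Suc i)) (As i) act))"
    by (rule chain_lemma[OF _ n]) (use step noe_ext in blast)
  have c3: "act_rees_artinian (As n) act \<longleftrightarrow> act_rees_artinian (As 1) act \<and>
            (\<forall>i\<in>{1..<n}. act_rees_artinian (rees_factor_carrier (As (Suc i)) (As i))
                                        (rees_factor_act (As (Suc i)) (As i) act))"
    by (rule chain_lemma[OF _ n]) (use step rart_ext in blast)
  have c4: "act_rees_noetherian (As n) act \<longleftrightarrow> act_rees_noetherian (As 1) act \<and>
            (\<forall>i\<in>{1..<n}. act_rees_noetherian (rees_factor_carrier (As (Suc i)) (As i))
                                        (rees_factor_act (As (Suc i)) (As i) act))"
    by (rule chain_lemma[OF _ n]) (use step rnoe_ext in blast)
  show ?thesis using c1 c2 c3 c4 assms(5) by simp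
qed

end
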